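(* Let $\alpha,\beta,\gamma,\delta$ be non-negative integers with $\alpha<\gamma$ and $\delta<\beta$, and let $a,a',b,b',c,c',d,d'$ be non-negative integers with $a,a'\le\alpha$, $b,b'\le\beta$, $c,c'\le\gamma$, $d,d'\le\delta$. Consider the mixed polynomial $$ g(z_1,z_2,\bar z_1,\bar z_2)= z_1^{a}\bar z_1^{\alpha-a}z_2^{b}\bar z_2^{\beta-b}- z_1^{a'}\bar z_1^{\alpha-a'}z_2^{b'}\bar z_2^{\beta-b'}+ z_1^{c}\bar z_1^{\gamma-c}z_2^{d}\bar z_2^{\delta-d}+ z_1^{c'}\bar z_1^{\gamma-c'}z_2^{d'}\bar z_2^{\delta-d'} . $$ Let $P={}^t(p_1,p_2)$ be a strictly positive integer weight vector and $Q={}^t(q_1,q_2)\neq \mathbf 0$ a weight vector with $q_1,q_2\ge 0$. Assume: (1) $p_1(\gamma-\alpha)+p_2(\delta-\beta)=0$; (2) $a-a'=q_2k$ and $b-b'=-q_1k$ for some non-zero integer $k$; (3) $(a-a',\,b-b')=(c-c',\,d-d')$; (4) $(2(a-c)-\alpha+\gamma,\ 2(b-d)-\beta+\delta)=\pm(a-a',\,b-b')$; (5) $q_1(2a-\alpha)+q_2(2b-\beta)\neq 0$. Then $g$ is a mixed weighted homogeneous polynomial, radially weighted homogeneous with respect to $P$ of radial degree $d_r=p_1\alpha+p_2\beta=p_1\gamma+p_2\delta>0$ and polar weighted homogeneous with respect to $Q$ of polar degree $d_p=q_1(2a-\alpha)+q_2(2b-\beta)\neq 0$. Moreover, for the Newton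 polyhedron $\Gamma_+(g)$ of the germ $(g,\mathbf 0)$ one has $\dim\Delta(P)=1$ and $g=g_{\Delta(P)}$, and $$ g^{-1}(0)\cap(\mathbb C^* )^2=\emptyset .$$ Consequently $(g,\mathbf 0)$ is Newton non-degenerate over $\Delta(P)$ but not strongly Newton non-degenerate over $\Delta(P)$.
   Context: A mixed polynomial is a finite sum $f(\mathbf z,\bar{\mathbf z})=\sum_{\nu,\mu}c_{\nu,\mu}\mathbf z^\nu\bar{\mathbf z}^\mu$ with $\nu,\mu\in\mathbb Z_+^n$, $\mathbf z^\nu=z_1^{\nu_1}\cdots z_n^{\nu_n}$, $\bar{\mathbf z}^\mu=\bar z_1^{\mu_1}\cdots\bar z_n^{\mu_n}$ (coefficients are unique); assume $f(\mathbf 0)=0$. A point $\mathbf a$ is a mixed critical point of $f$ if the real differential $df_{\mathbf a}:T_{\mathbf a}\mathbb C^n\to T_{f(\mathbf a)}\mathbb C\cong\mathbb R^2$ has rank $<2$. $f$ is radially weighted homogeneous with respect to $P={}^t(p_1,\dots,p_n)\in\mathbb Z_+^n\setminus\{0\}$ of radial degree $d_r>0$ if $c_{\nu,\mu}\ne0\Rightarrow\sum_i p_i(\nu_i+\mu_i)=d_r$; $f$ is polar weighted homogeneous with respect to $Q={}^t(q_1,\dots,q_n)\ne0$ of polar degree $d_p$ if $c_{\nu,\mu}\ne0\Rightarrow\sum_i q_i(\nu_i-\mu_i)=d_p$. A mixed weighted homogeneous polynomial is one that is both radially and polar weighted homogeneous (possibly with different weight vectors). The (radial) Newton polyhedron $\Gamma_+(f)$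 is the convex hull of $\bigcup_{c_{\nu,\mu}\neq0}\big((\nu+\mu)+\mathbb R_+^n\big)$. For $P\in\mathbb Z_+^n\setminus\{0\}$, $d(P)=\min_{\xi\in\Gamma_+(f)}\sum_j p_j\xi_j$ and the face $\Delta(P)=\{\xi\in\Gamma_+(f):\sum_jp_j\xi_j=d(P)\}$; $P$ is strictly positive if all $p_i>0$. For a compact face $\Delta$, the face function is $f_\Delta=\sum_{\nu+\mu\in\Delta}c_{\nu,\mu}\mathbf z^\nu\bar{\mathbf z}^\mu$. $(f,\mathbf 0)$ is Newton non-degenerate over a compact face $\Delta$ if $0$ is not a mixed critical value of $f_\Delta:(\mathbb C^* )^n\to\mathbb C$ (in particular this holds if $f_\Delta^{-1}(0)\cap(\mathbb C^* )^n=\emptyset$). For a compact face $\Delta$ with $\dim\Delta\ge1$, $(f,\mathbf 0)$ is strongly Newton non-degenerate over $\Delta$ if $f_\Delta:(\mathbb C^* )^n\to\mathbb C$ has no mixed critical points and is surjective onto $\mathbb C$. *)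

theory Defs
  imports "HOL-Analysis.Analysis"
begin

text \<open>Mixed polynomials in two complex variables z1, z2, given by their (unique) coefficient
  function.  An exponent is a pair ((nu1,nu2),(mu1,mu2)) standing for the monomial
  z1^nu1 z2^nu2 conj(z1)^mu1 conj(z2)^mu2.\<close>

type_synonym mexp = "(nat \<times> nat) \<times> (nat \<times> nat)"
type_synonym mpoly2 = "mexp \<Rightarrow> complex"

definition msupp :: "mpoly2 \<Rightarrow> mexp set" where
  "msupp f = {e. f e \<noteq> 0}"

definition is_mpoly2 :: "mpoly2 \<Rightarrow> bool" where
  "is_mpoly2 f \<longleftrightarrow> finite (msupp f)"

definition mmono :: "mexp \<Rightarrow> complex \<Rightarrow> mpoly2" where
  "mmono e c = (\<lambda>e'. if e' = e then c else 0)"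

definition madd :: "mpoly2 \<Rightarrow> mpoly2 \<Rightarrow> mpoly2" where
  "madd f h = (\<lambda>e. f e + h e)"

definition meval :: "mpoly2 \<Rightarrow> complex \<times> complex \<Rightarrow> complex" where
  "meval f z = (\<Sum>e\<in>msupp f. f e * fst z ^ fst (fst e) * snd z ^ snd (fst e)
                 * cnj (fst z) ^ fst (snd e) * cnj (snd z) ^ snd (snd e))"

definition mixed_critical_point :: "(complex \<times> complex \<Rightarrow> complex) \<Rightarrow> complex \<times> complex \<Rightarrow> bool" where
  "mixed_critical_point F a \<longleftrightarrow>
     (\<exists>F'. (F has_derivative F') (at a) \<and> dim (range F') < 2)"

definition torus2 :: "(complex \<times> complex) set" where
  "torus2 = {z. fst z \<noteq> 0 \<and> snd z \<noteq> 0}"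

definition radially_wh :: "mpoly2 \<Rightarrow> nat \<times> nat \<Rightarrow> nat \<Rightarrow> bool" where
  "radially_wh f P dr \<longleftrightarrow> dr > 0 \<and> (P \<noteq> (0,0)) \<and>
     (\<forall>e. f e \<noteq> 0 \<longrightarrow>
        fst P * (fst (fst e) + fst (snd e)) + snd P * (snd (fst e) + snd (snd e)) = dr)"

definition polar_wh :: "mpoly2 \<Rightarrow> int \<times> int \<Rightarrow> int \<Rightarrow> bool" where
  "polar_wh f Q dp \<longleftrightarrow> Q \<noteq> (0,0) \<and>
     (\<forall>e. f e \<noteq> 0 \<longrightarrow>
        fst Q * (int (fst (fst e)) - int (fst (snd e)))
          + snd Q * (int (snd (fst e)) - int (snd (snd e))) = dp)"

definition mixed_wh :: "mpoly2 \<Rightarrow> bool" where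
  "mixed_wh f \<longleftrightarrow> (\<exists>P dr. radially_wh f P dr) \<and> (\<exists>Q dp. polar_wh f Q dp)"

definition rexp :: "mexp \<Rightarrow> real \<times> real" where
  "rexp e = (real (fst (fst e) + fst (snd e)), real (snd (fst e) + snd (snd e)))"

definition newton_polyhedron :: "mpoly2 \<Rightarrow> (real \<times> real) set" where
  "newton_polyhedron f =
     convex hull (\<Union>e\<in>msupp f. {rexp e + v | v. fst v \<ge> 0 \<and> snd v \<ge> 0})"

definition wfun :: "nat \<times> nat \<Rightarrow> real \<times> real \<Rightarrow> real" where
  "wfun P \<xi> = real (fst P) * fst \<xi> + real (snd P) * snd \<xi>"

definition dP :: "mpoly2 \<Rightarrow> nat \<times> nat \<Rightarrow> real" where
  "dP f P = Inf (wfun P ` newton_polyhedron f)"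

definition faceP :: "mpoly2 \<Rightarrow> nat \<times> nat \<Rightarrow> (real \<times> real) set" where
  "faceP f P = {\<xi> \<in> newton_polyhedron f. wfun P \<xi> = dP f P}"

definition face_function :: "mpoly2 \<Rightarrow> (real \<times> real) set \<Rightarrow> mpoly2" where
  "face_function f \<Delta> = (\<lambda>e. if rexp e \<in> \<Delta> then f e else 0)"

definition newton_nondeg_over :: "mpoly2 \<Rightarrow> (real \<times> real) set \<Rightarrow> bool" where
  "newton_nondeg_over f \<Delta> \<longleftrightarrow>
     \<not> (\<exists>z\<in>torus2. mixed_critical_point (meval (face_function f \<Delta>)) z
                   \<and> meval (face_function f \<Delta>) z = 0)"

definition strongly_newton_nondeg_over :: "mpoly2 \<Rightarrow> (real \<times> real) set \<Rightarrow> bool" where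
  "strongly_newton_nondeg_over f \<Delta> \<longleftrightarrow> aff_dim \<Delta> \<ge> 1 \<and>
     (\<forall>z\<in>torus2. \<not> mixed_critical_point (meval (face_function f \<Delta>)) z) \<and>
     meval (face_function f \<Delta>) ` torus2 = UNIV"

end

theory Submission
  imports Defs
begin


definition mon :: "mexp \<Rightarrow> complex \<times> complex \<Rightarrow> complex" where
  "mon e z = fst z ^ fst (fst e) * snd z ^ snd (fst e) * cnj (fst z) ^ fst (snd e) * cnj (snd z) ^ snd (snd e)"

lemma meval_S: assumes "finite S" "msupp f \<subseteq> S"
  shows "meval f z = (\<Sum>e\<in>S. f e * mon e z)"
proof -
  have "(\<Sum>e\<in>msupp f. f e * mon e z) = (\<Sum>e\<in>S. f e * mon e z)"
    by (rule sum.mono_neutral_left) (use assms in \<open>auto simp: msupp_def\<close>)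
  then show ?thesis by (simp add: meval_def mon_def mult.assoc)
qed

lemma msupp_mmono: "msupp (mmono e c) \<subseteq> {e}" by (auto simp: msupp_def mmono_def)
lemma msupp_madd: "msupp (madd f h) \<subseteq> msupp f \<union> msupp h" by (auto simp: msupp_def madd_def)

lemma fin_mmono: "finite (msupp (mmono e c))" using msupp_mmono finite_subset by blast
lemma fin_madd: "finite (msupp f) \<Longrightarrow> finite (msupp h) \<Longrightarrow> finite (msupp (madd f h))"
  using msupp_madd finite_subset by (metis finite_Un)

lemma meval_mmono: "meval (mmono e c) z = c * mon e z"
  by (subst meval_S[of "{e}", OF _ msupp_mmono]) (auto simp: mmono_def)

lemma meval_madd: assumes "finite (msupp f)" "finite (msupp h)"
  shows "meval (madd f h) z = meval f z + meval h z"
proof -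
  let ?S = "msupp f \<union> msupp h"
  have "meval (madd f h) z = (\<Sum>e\<in>?S. madd f h e * mon e z)"
    by (rule meval_S) (use assms msupp_madd in auto)
  also have "\<dots> = (\<Sum>e\<in>?S. f e * mon e z) + (\<Sum>e\<in>?S. h e * mon e z)"
    by (simp add: madd_def distrib_right sum.distrib)
  also have "\<dots> = meval f z + meval h z"
  proof -
    have "meval f z = (\<Sum>e\<in>?S. f e * mon e z)" by (rule meval_S) (use assms in auto)
    moreover have "meval h z = (\<Sum>e\<in>?S. h e * mon e z)" by (rule meval_S) (use assms in auto)
    ultimately show ?thesis by simp
  qed
  finally show ?thesis .
qed

lemma cnj_unit: "norm (w::complex) = 1 \<Longrightarrow> cnj w = inverse w"
proof -
  assume n: "norm w = 1"
  have "w * cnj w = complex_of_real ((norm w) ^ 2)" by (rule complex_norm_square[symmetric])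
  then have "w * cnj w = 1" using n by simp
  then show "cnj w = inverse w" by (rule inverse_unique[symmetric])
qed

lemma pow_cnj: fixes z :: complex assumes "z \<noteq> 0"
  shows "z ^ n * cnj z ^ m = of_real (norm z ^ (n+m)) * (z / of_real (norm z)) powi (int n - int m)"
proof -
  define w where "w = z / of_real (norm z)"
  have nz: "norm z \<noteq> 0" using assms by simp
  have z: "z = of_real (norm z) * w" using nz by (simp add: w_def)
  have nw: "norm w = 1" using nz by (simp add: w_def norm_divide)
  have w0: "w \<noteq> 0" using nw by auto
  have cw: "cnj w = inverse w" using nw by (rule cnj_unit)
  have "z ^ n * cnj z ^ m = of_real (norm z ^ (n+m)) * (w ^ n * inverse w ^ m)"
    by (subst (1 2) z) (simp add: power_mult_distrib cw power_add)
  also have "w ^ n * inverse w ^ m = w powi (int n - int m)"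
    using w0 by (simp add: power_int_diff power_int_of_nat power_inverse field_simps)
  finally show ?thesis by (simp add: w_def)
qed

lemma core1: fixes X :: complex and R1 R2 :: real
  assumes "norm X = 1" "R1 \<noteq> 0" "R2 \<noteq> 0"
  shows "of_real R1 * (X*X - 1) + of_real R2 * (X + cnj X) \<noteq> 0"
proof
  assume h: "of_real R1 * (X*X - 1) + of_real R2 * (X + cnj X) = 0"
  obtain x y where X: "X = Complex x y" by (cases X)
  have n: "x*x + y*y = 1" using assms(1) unfolding X norm_complex_def
    by (simp add: power2_eq_square)
  have re: "R1 * (x*x - y*y - 1) + R2 * (2*x) = 0" and im: "R1 * (2*x*y) = 0"
    using arg_cong[OF h, of Re] arg_cong[OF h, of Im] by (auto simp: X algebra_simps)
  from im assms have "x = 0 \<or> y = 0" by auto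
  then show False
  proof
    assume "x = 0" with re n assms show False by auto
  next
    assume "y = 0" with re n assms have "x*x = 1" "R2 * x = 0" by auto
    then show False using assms by auto
  qed
qed

lemma core2: fixes X :: complex and R1 R2 :: real
  assumes "norm X = 1" "R1 \<noteq> 0" "R2 \<noteq> 0"
  shows "of_real R1 * (X - cnj X) + of_real R2 * (X * X + 1) \<noteq> 0"
proof
  assume h: "of_real R1 * (X - cnj X) + of_real R2 * (X * X + 1) = 0"
  obtain x y where X: "X = Complex x y" by (cases X)
  have n: "x*x + y*y = 1" using assms(1) unfolding X norm_complex_def
    by (simp add: power2_eq_square)
  have re: "R2 * (x*x - y*y + 1) = 0" and im: "R1 * (2*y) + R2 * (2*x*y) = 0"
    using arg_cong[OF h, of Re] arg_cong[OF h, of Im] by (auto simp: X algebra_simps)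
  from re assms have "x*x - y*y + 1 = 0" by simp
  with n have "x*x = 0" by linarith
  hence "x = 0" by simp
  with n im assms show False by auto
qed


definition WW :: "complex \<Rightarrow> complex \<Rightarrow> int \<Rightarrow> int \<Rightarrow> complex" where
  "WW w1 w2 i j = w1 powi i * w2 powi j"

lemma WW_add: "w1 \<noteq> 0 \<Longrightarrow> w2 \<noteq> 0 \<Longrightarrow> WW w1 w2 (i+i') (j+j') = WW w1 w2 i j * WW w1 w2 i' j'"
  by (simp add: WW_def power_int_add)


lemma WW_cnj: "norm w1 = 1 \<Longrightarrow> norm w2 = 1 \<Longrightarrow> cnj (WW w1 w2 i j) = WW w1 w2 (-i) (-j)"
  by (simp add: WW_def cnj_unit power_int_minus power_int_inverse)

lemma WW_norm: "norm w1 = 1 \<Longrightarrow> norm w2 = 1 \<Longrightarrow> norm (WW w1 w2 i j) = 1"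
  by (simp add: WW_def norm_mult norm_power_int)

lemma nonvan:
  fixes w1 w2 :: complex and R1 R2 :: real and A1 A2 B1 B2 C1 C2 D1 D2 ka kb :: int
  assumes n1: "norm w1 = 1" and n2: "norm w2 = 1" and R: "R1 \<noteq> 0" "R2 \<noteq> 0"
    and A: "A1 = B1 + ka + ka" "A2 = B2 + kb + kb"
    and CD: "(C1 = B1 + ka \<and> C2 = B2 + kb \<and> D1 = B1 + (-ka) \<and> D2 = B2 + (-kb))
           \<or> (C1 = B1 + ka + ka + ka \<and> C2 = B2 + kb + kb + kb \<and> D1 = B1 + ka \<and> D2 = B2 + kb)"
  shows "of_real R1 * WW w1 w2 A1 A2 - of_real R1 * WW w1 w2 B1 B2
        + of_real R2 * WW w1 w2 C1 C2 + of_real R2 * WW w1 w2 D1 D2 \<noteq> 0"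
proof -
  have w0: "w1 \<noteq> 0" "w2 \<noteq> 0" using n1 n2 by auto
  define X where "X = WW w1 w2 ka kb"
  define U where "U = WW w1 w2 B1 B2"
  have nX: "norm X = 1" and nU: "norm U = 1" using WW_norm n1 n2 by (auto simp: X_def U_def)
  have X0: "X \<noteq> 0" and U0: "U \<noteq> 0" using nX nU by auto
  have XcX: "X * cnj X = 1" using nX cnj_unit X0 by simp
  have WA: "WW w1 w2 A1 A2 = U * X * X" unfolding A U_def X_def by (simp only: WW_add[OF w0])
  from CD show ?thesis
  proof
    assume h: "C1 = B1 + ka \<and> C2 = B2 + kb \<and> D1 = B1 + (-ka) \<and> D2 = B2 + (-kb)"
    have WC: "WW w1 w2 C1 C2 = U * X" using h by (simp only: WW_add[OF w0] U_def X_def)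
    have WD: "WW w1 w2 D1 D2 = U * cnj X" using h
      by (simp only: WW_add[OF w0] U_def X_def WW_cnj[OF n1 n2])
    have "of_real R1 * WW w1 w2 A1 A2 - of_real R1 * WW w1 w2 B1 B2
        + of_real R2 * WW w1 w2 C1 C2 + of_real R2 * WW w1 w2 D1 D2
        = U * (of_real R1 * (X*X - 1) + of_real R2 * (X + cnj X))"
      unfolding WA WC WD U_def[symmetric] by (simp add: algebra_simps)
    also have "\<dots> \<noteq> 0" using U0 core1[OF nX R] by simp
    finally show ?thesis .
  next
    assume h: "C1 = B1 + ka + ka + ka \<and> C2 = B2 + kb + kb + kb \<and> D1 = B1 + ka \<and> D2 = B2 + kb"
    have WC: "WW w1 w2 C1 C2 = U * X * X * X" using h by (simp only: WW_add[OF w0] U_def X_def)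
    have WD: "WW w1 w2 D1 D2 = U * X" using h by (simp only: WW_add[OF w0] U_def X_def)
    have "of_real R1 * WW w1 w2 A1 A2 - of_real R1 * WW w1 w2 B1 B2
        + of_real R2 * WW w1 w2 C1 C2 + of_real R2 * WW w1 w2 D1 D2
        = U * X * (of_real R1 * (X - cnj X) + of_real R2 * (X*X + 1))"
    proof -
      have "U * X * (of_real R1 * (X - cnj X) + of_real R2 * (X*X + 1)) =
         of_real R1 * (U*X*X) - of_real R1 * (U*(X*cnj X)) + of_real R2*(U*X*X*X) + of_real R2*(U*X)"
        by (simp add: algebra_simps)
      then show ?thesis unfolding WA WC WD U_def[symmetric] XcX mult_1_right by simp
    qed
    also have "\<dots> \<noteq> 0" using U0 X0 core2[OF nX R] by simp
    finally show ?thesis .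
  qed
qed

lemma mon_eq: fixes z1 z2 :: complex assumes "z1 \<noteq> 0" "z2 \<noteq> 0"
  shows "mon ((n1,n2),(m1,m2)) (z1,z2) = of_real (norm z1 ^ (n1+m1) * norm z2 ^ (n2+m2))
     * WW (z1 / of_real (norm z1)) (z2 / of_real (norm z2)) (int n1 - int m1) (int n2 - int m2)"
proof -
  have "mon ((n1,n2),(m1,m2)) (z1,z2) = (z1^n1 * cnj z1^m1) * (z2^n2 * cnj z2^m2)"
    by (simp add: mon_def algebra_simps)
  also have "\<dots> = of_real (norm z1 ^ (n1+m1) * norm z2 ^ (n2+m2))
     * WW (z1 / of_real (norm z1)) (z2 / of_real (norm z2)) (int n1 - int m1) (int n2 - int m2)" unfolding pow_cnj[OF assms(1)] pow_cnj[OF assms(2)] WW_def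
    by (simp add: algebra_simps)
  finally show ?thesis .
qed


lemma quad_convex: "convex {x::real\<times>real. fst x \<ge> A \<and> snd x \<ge> B}"
proof -
  have "{x::real\<times>real. fst x \<ge> A \<and> snd x \<ge> B} = {x. inner (1,0) x \<ge> A} \<inter> {x. inner (0,1) x \<ge> B}"
    by (auto simp: inner_prod_def)
  then show ?thesis by (simp add: convex_Int convex_halfspace_ge)
qed

lemma geo:
  fixes pA pC :: "real \<times> real" and Px Py D :: real
  assumes P: "Px > 0" "Py > 0"
    and wA: "Px * fst pA + Py * snd pA = D" and wC: "Px * fst pC + Py * snd pC = D"
    and QA_def: "QA = {x::real\<times>real. fst x \<ge> fst pA \<and> snd x \<ge> snd pA}"
    and QC_def: "QC = {x::real\<times>real. fst x \<ge> fst pC \<and> snd x \<ge> snd pC}"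
    and wq_def: "\<And>x. wq x = Px * fst x + Py * snd x"
  shows "Inf (wq ` (convex hull (QA \<union> QC))) = D"
    and "{\<xi> \<in> convex hull (QA \<union> QC). wq \<xi> = D} = closed_segment pA pC"
proof -
  have cA: "convex QA" and cC: "convex QC" unfolding QA_def QC_def by (rule quad_convex)+
  have pA: "pA \<in> QA" and pC: "pC \<in> QC" by (auto simp: QA_def QC_def)
  have H: "convex hull (QA \<union> QC) =
    {u *\<^sub>R s + v *\<^sub>R t | u v s t. u \<ge> 0 \<and> v \<ge> 0 \<and> u + v = 1 \<and> s \<in> QA \<and> t \<in> QC}"
    by (rule convex_hull_union_two) (use cA cC pA pC in auto)
  have geA: "wq s \<ge> D" if "s \<in> QA" for s
  proof -
    have "Px * fst s \<ge> Px * fst pA" "Py * snd s \<ge> Py * snd pA"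
      using that P by (auto simp: QA_def)
    then show ?thesis using wA by (simp add: wq_def)
  qed
  have geC: "wq s \<ge> D" if "s \<in> QC" for s
  proof -
    have "Px * fst s \<ge> Px * fst pC" "Py * snd s \<ge> Py * snd pC"
      using that P by (auto simp: QC_def)
    then show ?thesis using wC by (simp add: wq_def)
  qed
  have eqA: "s = pA" if "s \<in> QA" "wq s = D" for s
  proof -
    have "Px * fst s \<ge> Px * fst pA" "Py * snd s \<ge> Py * snd pA"
      using that P by (auto simp: QA_def)
    moreover have "Px * fst s + Py * snd s = D" using that(2) wq_def by simp
    ultimately have "Px * fst s = Px * fst pA" "Py * snd s = Py * snd pA" using wA by linarith+
    then show ?thesis using P by (simp add: prod_eq_iff)
  qed
  have eqC: "s = pC" if "s \<in> QC" "wq s = D" for s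
  proof -
    have "Px * fst s \<ge> Px * fst pC" "Py * snd s \<ge> Py * snd pC"
      using that P by (auto simp: QC_def)
    moreover have "Px * fst s + Py * snd s = D" using that(2) wq_def by simp
    ultimately have "Px * fst s = Px * fst pC" "Py * snd s = Py * snd pC" using wC by linarith+
    then show ?thesis using P by (simp add: prod_eq_iff)
  qed
  have lin: "wq (u *\<^sub>R s + v *\<^sub>R t) = u * wq s + v * wq t" for u v s t
    by (simp add: wq_def algebra_simps)
  have ge: "wq x \<ge> D" if "x \<in> convex hull (QA \<union> QC)" for x
  proof -
    from that obtain u v s t where x: "x = u *\<^sub>R s + v *\<^sub>R t" and uv: "u \<ge> 0" "v \<ge> 0" "u + v = 1"
      and st: "s \<in> QA" "t \<in> QC" unfolding H by blast
    have "u * wq s \<ge> u * D" "v * wq t \<ge> v * D" using geA[OF st(1)] geC[OF st(2)] uv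
      by (auto intro: mult_left_mono)
    then have "u * wq s + v * wq t \<ge> (u + v) * D" by (simp add: distrib_right)
    then show ?thesis using x lin uv by simp
  qed
  have pAh: "pA \<in> convex hull (QA \<union> QC)" using pA by (simp add: hull_inc)
  have pCh: "pC \<in> convex hull (QA \<union> QC)" using pC by (simp add: hull_inc)
  show "Inf (wq ` (convex hull (QA \<union> QC))) = D"
    by (rule cInf_eq_minimum) (use pAh wA ge in \<open>auto simp: wq_def\<close>)
  show "{\<xi> \<in> convex hull (QA \<union> QC). wq \<xi> = D} = closed_segment pA pC"
  proof
    show "{\<xi> \<in> convex hull (QA \<union> QC). wq \<xi> = D} \<subseteq> closed_segment pA pC"
    proof
      fix x assume xx: "x \<in> {\<xi> \<in> convex hull (QA \<union> QC). wq \<xi> = D}"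
      then have xh: "x \<in> convex hull (QA \<union> QC)" and wx: "wq x = D" by auto
      from xh obtain u v s t where x: "x = u *\<^sub>R s + v *\<^sub>R t" and uv: "u \<ge> 0" "v \<ge> 0" "u + v = 1"
        and st: "s \<in> QA" "t \<in> QC" unfolding H by blast
      have a1: "u * wq s \<ge> u * D" "v * wq t \<ge> v * D" using geA[OF st(1)] geC[OF st(2)] uv
        by (auto intro: mult_left_mono)
      have "u * wq s + v * wq t = (u + v) * D" using x lin uv wx by simp
      then have "u * wq s + v * wq t = u * D + v * D" by (simp add: distrib_right)
      then have "u * wq s = u * D" "v * wq t = v * D" using a1 by linarith+
      then have "u = 0 \<or> wq s = D" "v = 0 \<or> wq t = D" by auto
      then have e1: "u *\<^sub>R s = u *\<^sub>R pA" and e2: "v *\<^sub>R t = v *\<^sub>R pC" using eqA[OF st(1)] eqC[OF st(2)] by auto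
      have "x = u *\<^sub>R pA + v *\<^sub>R pC" using x e1 e2 by (simp only:)
      moreover have "1 - v = u" using uv by simp
      ultimately have "x = (1 - v) *\<^sub>R pA + v *\<^sub>R pC" by simp
      then show "x \<in> closed_segment pA pC" using uv unfolding closed_segment_def by auto
    qed
  next
    show "closed_segment pA pC \<subseteq> {\<xi> \<in> convex hull (QA \<union> QC). wq \<xi> = D}"
    proof
      fix x assume xs: "x \<in> closed_segment pA pC"
      have sub: "closed_segment pA pC \<subseteq> convex hull (QA \<union> QC)"
        unfolding segment_convex_hull using pA pC by (intro hull_mono) auto
      from xs obtain u where xu: "x = (1 - u) *\<^sub>R pA + u *\<^sub>R pC" unfolding closed_segment_def by blast
      have "wq x = (1 - u) * wq pA + u * wq pC" unfolding xu by (rule lin)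
      moreover have "wq pA = D" "wq pC = D" using wA wC by (simp_all add: wq_def)
      ultimately have "wq x = D" by (simp add: algebra_simps)
      with sub show "x \<in> {\<xi> \<in> convex hull (QA \<union> QC). wq \<xi> = D}" using xs by auto
    qed
  qed
qed

theorem mainTheorem1:
  fixes \<alpha> \<beta> \<gamma> \<delta> a a' b b' c c' d d' p1 p2 :: nat
    and q1 q2 :: int
    and g :: mpoly2
  assumes "\<alpha> < \<gamma>" and "\<delta> < \<beta>"
    and "a \<le> \<alpha>" "a' \<le> \<alpha>" "b \<le> \<beta>" "b' \<le> \<beta>"
    and "c \<le> \<gamma>" "c' \<le> \<gamma>" "d \<le> \<delta>" "d' \<le> \<delta>"
    and g_def: "g = madd (madd (madd (mmono ((a, b), (\<alpha> - a, \<beta> - b)) 1)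
                  (mmono ((a', b'), (\<alpha> - a', \<beta> - b')) (-1)))
                  (mmono ((c, d), (\<gamma> - c, \<delta> - d)) 1))
                  (mmono ((c', d'), (\<gamma> - c', \<delta> - d')) 1)"
    and "p1 > 0" "p2 > 0"
    and "q1 \<ge> 0" "q2 \<ge> 0" "(q1, q2) \<noteq> (0, 0)"
    and h1: "int p1 * (int \<gamma> - int \<alpha>) + int p2 * (int \<delta> - int \<beta>) = 0"
    and h2: "\<exists>k::int. k \<noteq> 0 \<and> int a - int a' = q2 * k \<and> int b - int b' = - q1 * k"
    and h3: "(int a - int a', int b - int b') = (int c - int c', int d - int d')"
    and h4: "(2 * (int a - int c) - int \<alpha> + int \<gamma>, 2 * (int b - int d) - int \<beta> + int \<delta>)
               = (int a - int a', int b - int b')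
           \<or> (2 * (int a - int c) - int \<alpha> + int \<gamma>, 2 * (int b - int d) - int \<beta> + int \<delta>)
               = (- (int a - int a'), - (int b - int b'))"
    and h5: "q1 * (2 * int a - int \<alpha>) + q2 * (2 * int b - int \<beta>) \<noteq> 0"
  shows "mixed_wh g
    \<and> p1 * \<alpha> + p2 * \<beta> = p1 * \<gamma> + p2 * \<delta>
    \<and> radially_wh g (p1, p2) (p1 * \<alpha> + p2 * \<beta>)
    \<and> polar_wh g (q1, q2) (q1 * (2 * int a - int \<alpha>) + q2 * (2 * int b - int \<beta>))
    \<and> q1 * (2 * int a - int \<alpha>) + q2 * (2 * int b - int \<beta>) \<noteq> 0
    \<and> aff_dim (faceP g (p1, p2)) = 1
    \<and> g = face_function g (faceP g (p1, p2))
    \<and> (\<forall>z\<in>torus2. meval g z \<noteq> 0)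
    \<and> newton_nondeg_over g (faceP g (p1, p2))
    \<and> \<not> strongly_newton_nondeg_over g (faceP g (p1, p2))"
  proof -
  note lea = \<open>a \<le> \<alpha>\<close> \<open>a' \<le> \<alpha>\<close> \<open>b \<le> \<beta>\<close> \<open>b' \<le> \<beta>\<close> \<open>c \<le> \<gamma>\<close> \<open>c' \<le> \<gamma>\<close> \<open>d \<le> \<delta>\<close> \<open>d' \<le> \<delta>\<close>
  obtain k where k: "k \<noteq> 0" "int a - int a' = q2 * k" "int b - int b' = - q1 * k" using h2 by blast
  define e1 where "e1 = ((a, b), (\<alpha> - a, \<beta> - b))"
  define e2 where "e2 = ((a', b'), (\<alpha> - a', \<beta> - b'))"
  define e3 where "e3 = ((c, d), (\<gamma> - c, \<delta> - d))"
  define e4 where "e4 = ((c', d'), (\<gamma> - c', \<delta> - d'))"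
  have gE: "g e = (if e = e1 then 1 else 0) + (if e = e2 then -1 else 0) + (if e = e3 then 1 else 0) + (if e = e4 then 1 else 0)" for e
    unfolding g_def madd_def mmono_def e1_def e2_def e3_def e4_def by simp
  have supp: "e = e1 \<or> e = e2 \<or> e = e3 \<or> e = e4" if "g e \<noteq> 0" for e
    using that gE[of e] by (auto split: if_splits)
  have ab: "(a, b) \<noteq> (a', b')"
  proof
    assume "(a,b) = (a',b')"
    then have "q2 * k = 0" "q1 * k = 0" using k by auto
    then show False using k(1) \<open>(q1, q2) \<noteq> (0, 0)\<close> by auto
  qed
  have e12: "e1 \<noteq> e2" using ab by (auto simp: e1_def e2_def)
  have e13: "e1 \<noteq> e3" "e1 \<noteq> e4" "e2 \<noteq> e3" "e2 \<noteq> e4"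
    using \<open>\<alpha> < \<gamma>\<close> lea by (auto simp: e1_def e2_def e3_def e4_def)
  have ge1: "g e1 = 1" using gE[of e1] e12 e13 by simp
  have ge3: "g e3 \<noteq> 0" using gE[of e3] e13 by (simp split: if_splits)
  have dreq: "p1 * \<alpha> + p2 * \<beta> = p1 * \<gamma> + p2 * \<delta>"
  proof -
    have "int (p1 * \<alpha> + p2 * \<beta>) = int (p1 * \<gamma> + p2 * \<delta>)" using h1 by (simp add: algebra_simps)
    then show ?thesis by (simp only: of_nat_eq_iff)
  qed
  define dr where "dr = p1 * \<alpha> + p2 * \<beta>"
  have drpos: "dr > 0" using \<open>\<delta> < \<beta>\<close> \<open>p2 > 0\<close> by (simp add: dr_def)
  have radial: "radially_wh g (p1, p2) dr"
    unfolding radially_wh_def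
  proof (intro conjI allI impI)
    show "0 < dr" by (rule drpos)
    show "(p1, p2) \<noteq> (0, 0)" using \<open>p1 > 0\<close> by simp
    fix e assume "g e \<noteq> 0"
    then have "e = e1 \<or> e = e2 \<or> e = e3 \<or> e = e4" by (rule supp)
    then show "fst (p1, p2) * (fst (fst e) + fst (snd e)) + snd (p1, p2) * (snd (fst e) + snd (snd e)) = dr"
      using lea dreq by (auto simp: e1_def e2_def e3_def e4_def dr_def)
  qed
  define dp where "dp = q1 * (2 * int a - int \<alpha>) + q2 * (2 * int b - int \<beta>)"
  have ia': "int a' = int a - q2 * k" and ib': "int b' = int b + q1 * k" using k by auto
  have h3a: "int c - int c' = int a - int a'" and h3b: "int d - int d' = int b - int b'" using h3 by auto
  have polar: "polar_wh g (q1, q2) dp"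
    unfolding polar_wh_def
  proof (intro conjI allI impI)
    show "(q1, q2) \<noteq> (0, 0)" by fact
    fix e assume "g e \<noteq> 0"
    then have "e = e1 \<or> e = e2 \<or> e = e3 \<or> e = e4" by (rule supp)
    then show "fst (q1, q2) * (int (fst (fst e)) - int (fst (snd e))) + snd (q1, q2) * (int (snd (fst e)) - int (snd (snd e))) = dp"
    proof (elim disjE)
      assume "e = e1" then show ?thesis using lea by (simp add: e1_def dp_def of_nat_diff algebra_simps)
    next
      assume "e = e2"
      then have "fst (q1, q2) * (int (fst (fst e)) - int (fst (snd e))) + snd (q1, q2) * (int (snd (fst e)) - int (snd (snd e)))
          = q1 * (2 * int a' - int \<alpha>) + q2 * (2 * int b' - int \<beta>)"
        using lea by (simp add: e2_def of_nat_diff algebra_simps)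
      also have "\<dots> = dp" unfolding dp_def ia' ib' by algebra
      finally show ?thesis .
    next
      assume "e = e3"
      then have "fst (q1, q2) * (int (fst (fst e)) - int (fst (snd e))) + snd (q1, q2) * (int (snd (fst e)) - int (snd (snd e)))
          = q1 * (2 * int c - int \<gamma>) + q2 * (2 * int d - int \<delta>)"
        using lea by (simp add: e3_def of_nat_diff algebra_simps)
      also have "\<dots> = dp" using h4
      proof (elim disjE)
        assume "(2 * (int a - int c) - int \<alpha> + int \<gamma>, 2 * (int b - int d) - int \<beta> + int \<delta>) = (int a - int a', int b - int b')"
        then have "2 * int c - int \<gamma> = 2 * int a - int \<alpha> - (int a - int a')"
          "2 * int d - int \<delta> = 2 * int b - int \<beta> - (int b - int b')" by auto
        then show ?thesis unfolding ia' ib' dp_def by algebra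
      next
        assume "(2 * (int a - int c) - int \<alpha> + int \<gamma>, 2 * (int b - int d) - int \<beta> + int \<delta>) = (- (int a - int a'), - (int b - int b'))"
        then have "2 * int c - int \<gamma> = 2 * int a - int \<alpha> + (int a - int a')"
          "2 * int d - int \<delta> = 2 * int b - int \<beta> + (int b - int b')" by auto
        then show ?thesis unfolding ia' ib' dp_def by algebra
      qed
      finally show ?thesis .
    next
      assume "e = e4"
      then have "fst (q1, q2) * (int (fst (fst e)) - int (fst (snd e))) + snd (q1, q2) * (int (snd (fst e)) - int (snd (snd e)))
          = q1 * (2 * int c' - int \<gamma>) + q2 * (2 * int d' - int \<delta>)"
        using lea by (simp add: e4_def of_nat_diff algebra_simps)
      also have "\<dots> = dp" using h4
      proof (elim disjE)
        assume "(2 * (int a - int c) - int \<alpha> + int \<gamma>, 2 * (int b - int d) - int \<beta> + int \<delta>) = (int a - int a', int b - int b')"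
        then have "2 * int c' - int \<gamma> = 2 * int a - int \<alpha> - 3 * (int a - int a')"
          "2 * int d' - int \<delta> = 2 * int b - int \<beta> - 3 * (int b - int b')" using h3a h3b by auto
        then show ?thesis unfolding ia' ib' dp_def by algebra
      next
        assume "(2 * (int a - int c) - int \<alpha> + int \<gamma>, 2 * (int b - int d) - int \<beta> + int \<delta>) = (- (int a - int a'), - (int b - int b'))"
        then have "2 * int c' - int \<gamma> = 2 * int a - int \<alpha> - (int a - int a')"
          "2 * int d' - int \<delta> = 2 * int b - int \<beta> - (int b - int b')" using h3a h3b by auto
        then show ?thesis unfolding ia' ib' dp_def by algebra
      qed
      finally show ?thesis .
    qed
  qed
  have mwh: "mixed_wh g" unfolding mixed_wh_def using radial polar by blast
  have nv: "meval g z \<noteq> 0" if zt: "z \<in> torus2" for z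
  proof -
    obtain z1 z2 where z: "z = (z1, z2)" by (cases z)
    have z0: "z1 \<noteq> 0" "z2 \<noteq> 0" using zt by (auto simp: torus2_def z)
    define w1 where "w1 = z1 / of_real (norm z1)"
    define w2 where "w2 = z2 / of_real (norm z2)"
    have nw: "norm w1 = 1" "norm w2 = 1" using z0 by (auto simp: w1_def w2_def norm_divide)
    have ev: "meval g z = 1 * mon e1 z + (-1) * mon e2 z + 1 * mon e3 z + 1 * mon e4 z"
      unfolding g_def e1_def e2_def e3_def e4_def
      by (simp add: meval_madd fin_madd fin_mmono meval_mmono)
    define R1 where "R1 = norm z1 ^ \<alpha> * norm z2 ^ \<beta>"
    define R2 where "R2 = norm z1 ^ \<gamma> * norm z2 ^ \<delta>"
    have R: "R1 \<noteq> 0" "R2 \<noteq> 0" using z0 by (auto simp: R1_def R2_def)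
    have m1: "mon e1 z = of_real R1 * WW w1 w2 (int a - int (\<alpha> - a)) (int b - int (\<beta> - b))"
      using lea unfolding e1_def z mon_eq[OF z0] by (simp add: R1_def w1_def w2_def)
    have m2: "mon e2 z = of_real R1 * WW w1 w2 (int a' - int (\<alpha> - a')) (int b' - int (\<beta> - b'))"
      using lea unfolding e2_def z mon_eq[OF z0] by (simp add: R1_def w1_def w2_def)
    have m3: "mon e3 z = of_real R2 * WW w1 w2 (int c - int (\<gamma> - c)) (int d - int (\<delta> - d))"
      using lea unfolding e3_def z mon_eq[OF z0] by (simp add: R2_def w1_def w2_def)
    have m4: "mon e4 z = of_real R2 * WW w1 w2 (int c' - int (\<gamma> - c')) (int d' - int (\<delta> - d'))"
      using lea unfolding e4_def z mon_eq[OF z0] by (simp add: R2_def w1_def w2_def)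
    have "of_real R1 * WW w1 w2 (int a - int (\<alpha> - a)) (int b - int (\<beta> - b))
        - of_real R1 * WW w1 w2 (int a' - int (\<alpha> - a')) (int b' - int (\<beta> - b'))
        + of_real R2 * WW w1 w2 (int c - int (\<gamma> - c)) (int d - int (\<delta> - d))
        + of_real R2 * WW w1 w2 (int c' - int (\<gamma> - c')) (int d' - int (\<delta> - d')) \<noteq> 0"
    proof (rule nonvan[OF nw R, where ka = "int a - int a'" and kb = "int b - int b'"])
      show "int a - int (\<alpha> - a) = int a' - int (\<alpha> - a') + (int a - int a') + (int a - int a')"
        using lea by (simp add: of_nat_diff)
      show "int b - int (\<beta> - b) = int b' - int (\<beta> - b') + (int b - int b') + (int b - int b')"
        using lea by (simp add: of_nat_diff)
      show "int c - int (\<gamma> - c) = int a' - int (\<alpha> - a') + (int a - int a') \<and>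
            int d - int (\<delta> - d) = int b' - int (\<beta> - b') + (int b - int b') \<and>
            int c' - int (\<gamma> - c') = int a' - int (\<alpha> - a') + - (int a - int a') \<and>
            int d' - int (\<delta> - d') = int b' - int (\<beta> - b') + - (int b - int b') \<or>
            int c - int (\<gamma> - c) = int a' - int (\<alpha> - a') + (int a - int a') + (int a - int a') + (int a - int a') \<and>
            int d - int (\<delta> - d) = int b' - int (\<beta> - b') + (int b - int b') + (int b - int b') + (int b - int b') \<and>
            int c' - int (\<gamma> - c') = int a' - int (\<alpha> - a') + (int a - int a') \<and>
            int d' - int (\<delta> - d') = int b' - int (\<beta> - b') + (int b - int b')"
      proof -
        have i: "int (\<alpha> - a) = int \<alpha> - int a" "int (\<alpha> - a') = int \<alpha> - int a'"
          "int (\<beta> - b) = int \<beta> - int b" "int (\<beta> - b') = int \<beta> - int b'"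
          "int (\<gamma> - c) = int \<gamma> - int c" "int (\<gamma> - c') = int \<gamma> - int c'"
          "int (\<delta> - d) = int \<delta> - int d" "int (\<delta> - d') = int \<delta> - int d'"
          using lea by (simp_all add: of_nat_diff)
        from h4 show ?thesis
        proof (elim disjE)
          assume "(2 * (int a - int c) - int \<alpha> + int \<gamma>, 2 * (int b - int d) - int \<beta> + int \<delta>) = (int a - int a', int b - int b')"
          then have hh: "2 * (int a - int c) - int \<alpha> + int \<gamma> = int a - int a'" "2 * (int b - int d) - int \<beta> + int \<delta> = int b - int b'" by simp_all
          have "int c - int (\<gamma> - c) = int a' - int (\<alpha> - a') + (int a - int a')" using h3a h3b i hh by algebra
          moreover have "int d - int (\<delta> - d) = int b' - int (\<beta> - b') + (int b - int b')" using h3a h3b i hh by algebra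
          moreover have "int c' - int (\<gamma> - c') = int a' - int (\<alpha> - a') + - (int a - int a')" using h3a h3b i hh by algebra
          moreover have "int d' - int (\<delta> - d') = int b' - int (\<beta> - b') + - (int b - int b')" using h3a h3b i hh by algebra
          ultimately show ?thesis by (intro disjI1) blast
        next
          assume "(2 * (int a - int c) - int \<alpha> + int \<gamma>, 2 * (int b - int d) - int \<beta> + int \<delta>) = (- (int a - int a'), - (int b - int b'))"
          then have hh: "2 * (int a - int c) - int \<alpha> + int \<gamma> = - (int a - int a')" "2 * (int b - int d) - int \<beta> + int \<delta> = - (int b - int b')" by simp_all
          have "int c - int (\<gamma> - c) = int a' - int (\<alpha> - a') + (int a - int a') + (int a - int a') + (int a - int a')" using h3a h3b i hh by algebra
          moreover have "int d - int (\<delta> - d) = int b' - int (\<beta> - b') + (int b - int b') + (int b - int b') + (int b - int b')" using h3a h3b i hh by algebra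
          moreover have "int c' - int (\<gamma> - c') = int a' - int (\<alpha> - a') + (int a - int a')" using h3a h3b i hh by algebra
          moreover have "int d' - int (\<delta> - d') = int b' - int (\<beta> - b') + (int b - int b')" using h3a h3b i hh by algebra
          ultimately show ?thesis by (intro disjI2) blast
        qed
      qed
    qed
    then show ?thesis unfolding ev m1 m2 m3 m4 by simp
  qed
  define pA where "pA = (real \<alpha>, real \<beta>)"
  define pC where "pC = (real \<gamma>, real \<delta>)"
  define QA where "QA = {x::real\<times>real. fst x \<ge> fst pA \<and> snd x \<ge> snd pA}"
  define QC where "QC = {x::real\<times>real. fst x \<ge> fst pC \<and> snd x \<ge> snd pC}"
  have quad: "{p + v | v. 0 \<le> fst v \<and> 0 \<le> snd v} = {x::real\<times>real. fst x \<ge> fst p \<and> snd x \<ge> snd p}" for p :: "real \<times> real"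
  proof (intro set_eqI iffI)
    fix x assume "x \<in> {p + v | v. 0 \<le> fst v \<and> 0 \<le> snd v}"
    then show "x \<in> {x. fst x \<ge> fst p \<and> snd x \<ge> snd p}" by auto
  next
    fix x assume "x \<in> {x::real\<times>real. fst x \<ge> fst p \<and> snd x \<ge> snd p}"
    then have "x = p + (x - p)" "0 \<le> fst (x - p) \<and> 0 \<le> snd (x - p)" by auto
    then show "x \<in> {p + v | v. 0 \<le> fst v \<and> 0 \<le> snd v}" by blast
  qed
  have rex: "rexp e1 = pA" "rexp e2 = pA" "rexp e3 = pC" "rexp e4 = pC"
    using lea by (simp_all add: rexp_def e1_def e2_def e3_def e4_def pA_def pC_def)
  have rexs: "rexp e = pA \<or> rexp e = pC" if "e \<in> msupp g" for e
    using supp[of e] that rex by (auto simp: msupp_def)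
  have NP: "newton_polyhedron g = convex hull (QA \<union> QC)"
  proof -
    have "(\<Union>e\<in>msupp g. {rexp e + v | v. fst v \<ge> 0 \<and> snd v \<ge> 0}) = QA \<union> QC"
    proof
      show "(\<Union>e\<in>msupp g. {rexp e + v | v. fst v \<ge> 0 \<and> snd v \<ge> 0}) \<subseteq> QA \<union> QC"
        using rexs unfolding QA_def QC_def quad by fastforce
      have "e1 \<in> msupp g" "e3 \<in> msupp g" using ge1 ge3 by (auto simp: msupp_def)
      then show "QA \<union> QC \<subseteq> (\<Union>e\<in>msupp g. {rexp e + v | v. fst v \<ge> 0 \<and> snd v \<ge> 0})"
        unfolding QA_def QC_def quad using rex by blast
    qed
    then show ?thesis unfolding newton_polyhedron_def by simp
  qed
  have wA: "real p1 * fst pA + real p2 * snd pA = real dr" by (simp add: pA_def dr_def)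
  have wC: "real p1 * fst pC + real p2 * snd pC = real dr"
  proof -
    have "real dr = real (p1 * \<gamma> + p2 * \<delta>)" using dreq by (simp add: dr_def)
    then show ?thesis by (simp add: pC_def)
  qed
  have wfe: "\<And>x. wfun (p1, p2) x = real p1 * fst x + real p2 * snd x" by (simp add: wfun_def)
  note G = geo[where Px = "real p1" and Py = "real p2" and D = "real dr" and pA = pA and pC = pC
      and QA = QA and QC = QC and wq = "wfun (p1, p2)", OF _ _ wA wC QA_def QC_def wfe]
  have dPe: "dP g (p1, p2) = real dr"
    unfolding dP_def NP using G(1) \<open>p1 > 0\<close> \<open>p2 > 0\<close> by simp
  have face: "faceP g (p1, p2) = closed_segment pA pC"
    unfolding faceP_def dPe NP using G(2) \<open>p1 > 0\<close> \<open>p2 > 0\<close> by simp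
  have pAC: "pA \<noteq> pC" using \<open>\<alpha> < \<gamma>\<close> by (simp add: pA_def pC_def)
  have affd: "aff_dim (faceP g (p1, p2)) = 1"
    unfolding face segment_convex_hull aff_dim_convex_hull using pAC by simp
  have ffg: "face_function g (faceP g (p1, p2)) = g"
  proof
    fix e
    show "face_function g (faceP g (p1, p2)) e = g e"
    proof (cases "g e = 0")
      case True then show ?thesis by (simp add: face_function_def)
    next
      case False
      then have "rexp e \<in> closed_segment pA pC" using rexs[of e] by (auto simp: msupp_def)
      then show ?thesis by (simp add: face_function_def face)
    qed
  qed
  have nn: "newton_nondeg_over g (faceP g (p1, p2))"
    unfolding newton_nondeg_over_def ffg using nv by blast
  have ns: "\<not> strongly_newton_nondeg_over g (faceP g (p1, p2))"
  proof
    assume "strongly_newton_nondeg_over g (faceP g (p1, p2))"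
    then have "meval g ` torus2 = UNIV" unfolding strongly_newton_nondeg_over_def ffg by blast
    then have "0 \<in> meval g ` torus2" by simp
    then show False using nv by auto
  qed
  show ?thesis
    using mwh dreq radial polar h5 affd ffg nv nn ns by (simp add: dr_def dp_def)
qed

end
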